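(* Let $g=(g_1,\dots,g_m)$ be real polynomials in $x\in\mathbb R^n$ with $V_{\mathbb R}(g)\neq\emptyset$, and let $d\ge1$. (i) If $V_{\mathbb R}(g)$ is compact, then for $f\in\mathbb R[x]_{\le d}$: $\delta_g(f)>0\iff f\in\operatorname{int}P_d(g)$, and $\delta_g(f)=0\iff f\in\partial P_d(g)$. (ii) If $V^h_{\mathbb R}(g)$ is closed at $\infty$, then for $f\in\mathbb R[x]_{\le d}$: $\delta^h_g(f)>0\iff f\in\operatorname{int}P_d(g)$, and $\delta^h_g(f)=0\iff f\in\partial P_d(g)$.
   Context: $\mathbb R[x]_{\le d}$ is the finite-dimensional space of real polynomials in $x=(x_1,\dots,x_n)$ of degree at most $d$; interior and boundary are taken there in the Euclidean topology. $V_{\mathbb R}(g)=\{x\in\mathbb R^n:g_1(x)=\dots=g_m(x)=0\}$ and $P_d(g)=\{f\in\mathbb R[x]_{\le d}: f(x)\ge0\ \forall x\in V_{\mathbb R}(g)\}$. With $\tilde x=(x_0,x_1,\dots,x_n)$: for $f\in\mathbb R[x]_{\le d}$, $f^h(\tilde x)=x_0^df(x/x_0)$; for each $g_i$ of degree $d_i$, $g_i^h(\tilde x)=x_0^{d_i}g_i(x/x_0)$. $V^h_{\mathbb R}(g)=\{\tilde x\in\mathbb R^{n+1}:g_1^h(\tilde x)=\dots=g_m^h(\tilde x)=0\}$; it is closed at $\infty$ if $V^h_{\mathbb R}(g)\cap\{x_0\ge0\}$ equals the Euclidean closure of $V^h_{\mathbb R}(g)\cap\{x_0>0\}$. Define $\delta_g(f)=\min_{x\in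 V_{\mathbb R}(g)}f(x)$ and $\delta^h_g(f)=\min\{f^h(\tilde x):\tilde x\in V^h_{\mathbb R}(g),\ \|\tilde x\|_2=1,\ x_0\ge0\}$. *)

theory Defs
  imports "HOL-Analysis.Analysis"
begin

text \<open>Real polynomials in the variables indexed by the finite type 'n are represented
  by their coefficient functions on monomials (exponent vectors 'n \<Rightarrow> nat).  Points of R^n are vectors real^'n;
  points of R^(n+1) are pairs (x0, x) :: real \<times> (real^'n) (Euclidean norm).\<close>

type_synonym 'n mpoly_c = "('n \<Rightarrow> nat) \<Rightarrow> real"

definition mdeg :: "('n::finite \<Rightarrow> nat) \<Rightarrow> nat" where
  "mdeg \<alpha> = (\<Sum>i\<in>UNIV. \<alpha> i)"

definition is_poly :: "'n mpoly_c \<Rightarrow> bool" where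
  "is_poly c \<longleftrightarrow> finite {\<alpha>. c \<alpha> \<noteq> 0}"

definition pdeg :: "('n::finite) mpoly_c \<Rightarrow> nat" where
  "pdeg c = Max (insert 0 (mdeg ` {\<alpha>. c \<alpha> \<noteq> 0}))"

definition peval :: "('n::finite) mpoly_c \<Rightarrow> real^'n \<Rightarrow> real" where
  "peval c x = (\<Sum>\<alpha>\<in>{\<alpha>. c \<alpha> \<noteq> 0}. c \<alpha> * (\<Prod>i\<in>UNIV. (x $ i) ^ \<alpha> i))"

text \<open>Homogenization with respect to a given degree e: x0^e * c(x/x0).\<close>
definition hom_eval :: "nat \<Rightarrow> ('n::finite) mpoly_c \<Rightarrow> real \<times> (real^'n) \<Rightarrow> real" where
  "hom_eval e c y = (\<Sum>\<alpha>\<in>{\<alpha>. c \<alpha> \<noteq> 0}.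
      c \<alpha> * fst y ^ (e - mdeg \<alpha>) * (\<Prod>i\<in>UNIV. (snd y $ i) ^ \<alpha> i))"

definition PolySp :: "nat \<Rightarrow> ('n::finite) mpoly_c set" where
  "PolySp d = {c. \<forall>\<alpha>. c \<alpha> \<noteq> 0 \<longrightarrow> mdeg \<alpha> \<le> d}"

definition VR :: "('n::finite) mpoly_c list \<Rightarrow> (real^'n) set" where
  "VR gs = {x. \<forall>g\<in>set gs. peval g x = 0}"

definition VRh :: "('n::finite) mpoly_c list \<Rightarrow> (real \<times> (real^'n)) set" where
  "VRh gs = {y. \<forall>g\<in>set gs. hom_eval (pdeg g) g y = 0}"

definition closed_at_infinity :: "('n::finite) mpoly_c list \<Rightarrow> bool" where
  "closed_at_infinity gs \<longleftrightarrow>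
     VRh gs \<inter> {y. fst y \<ge> 0} = closure (VRh gs \<inter> {y. fst y > 0})"

definition Pd :: "nat \<Rightarrow> ('n::finite) mpoly_c list \<Rightarrow> ('n::finite) mpoly_c set" where
  "Pd d gs = {f \<in> PolySp d. \<forall>x\<in>VR gs. peval f x \<ge> 0}"

definition delta :: "('n::finite) mpoly_c list \<Rightarrow> ('n::finite) mpoly_c \<Rightarrow> real" where
  "delta gs f = Inf (peval f ` VR gs)"

definition delta_h :: "nat \<Rightarrow> ('n::finite) mpoly_c list \<Rightarrow> ('n::finite) mpoly_c \<Rightarrow> real" where
  "delta_h d gs f = Inf (hom_eval d f ` {y \<in> VRh gs. norm y = 1 \<and> fst y \<ge> 0})"

text \<open>Euclidean topology on R[x]_{<= d}: the (product) topology on coefficient functions,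
  restricted to the finite-dimensional subspace PolySp d.\<close>
abbreviation PolyTop :: "nat \<Rightarrow> ('n::finite) mpoly_c topology" where
  "PolyTop d \<equiv> subtopology euclidean (PolySp d)"

end

theory Submission
  imports Defs
begin


definition Mset :: "nat \<Rightarrow> ('n::finite \<Rightarrow> nat) set" where
  "Mset d = {\<alpha>. mdeg \<alpha> \<le> d}"

definition mmono :: "('n::finite \<Rightarrow> nat) \<Rightarrow> real^'n \<Rightarrow> real" where
  "mmono \<alpha> x = (\<Prod>i\<in>UNIV. (x $ i) ^ \<alpha> i)"

definition hmono :: "nat \<Rightarrow> ('n::finite \<Rightarrow> nat) \<Rightarrow> real \<times> (real^'n) \<Rightarrow> real" where
  "hmono e \<alpha> y = fst y ^ (e - mdeg \<alpha>) * mmono \<alpha> (snd y)"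

lemma finite_Mset: "finite (Mset d :: ('n::finite \<Rightarrow> nat) set)"
proof -
  have "Mset d \<subseteq> PiE (UNIV::'n set) (\<lambda>_. {..d})"
  proof
    fix \<alpha> :: "'n \<Rightarrow> nat" assume "\<alpha> \<in> Mset d"
    then have "\<alpha> i \<le> d" for i
      using member_le_sum[of i UNIV \<alpha>] by (auto simp: Mset_def mdeg_def)
    then show "\<alpha> \<in> PiE UNIV (\<lambda>_. {..d})" by auto
  qed
  moreover have "finite (PiE (UNIV::'n set) (\<lambda>_. {..d}))" by (intro finite_PiE) auto
  ultimately show ?thesis by (rule finite_subset)
qed

lemma PolySp_iff: "c \<in> PolySp d \<longleftrightarrow> (\<forall>\<alpha>. \<alpha> \<notin> Mset d \<longrightarrow> c \<alpha> = 0)"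
  by (auto simp: PolySp_def Mset_def)

lemma supp_sub: "c \<in> PolySp d \<Longrightarrow> {\<alpha>. c \<alpha> \<noteq> 0} \<subseteq> Mset d"
  by (auto simp: PolySp_iff)

lemma peval_M: assumes "c \<in> PolySp d"
  shows "peval c x = (\<Sum>\<alpha>\<in>Mset d. c \<alpha> * mmono \<alpha> x)"
  unfolding peval_def mmono_def
  by (rule sym, rule sum.mono_neutral_right[OF finite_Mset supp_sub[OF assms]]) auto

lemma hom_M: assumes "c \<in> PolySp d"
  shows "hom_eval d c y = (\<Sum>\<alpha>\<in>Mset d. c \<alpha> * hmono d \<alpha> y)"
  unfolding hom_eval_def hmono_def mmono_def mult.assoc[symmetric]
  by (rule sym, rule sum.mono_neutral_right[OF finite_Mset supp_sub[OF assms]]) (auto simp: mult.assoc)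

lemma hom_scale:
  assumes "\<forall>\<alpha>. c \<alpha> \<noteq> 0 \<longrightarrow> mdeg \<alpha> \<le> e"
  shows "hom_eval e c (s * a, s *\<^sub>R z) = s ^ e * hom_eval e c (a, z)"
  unfolding hom_eval_def sum_distrib_left
proof (rule sum.cong[OF refl])
  fix \<alpha> assume "\<alpha> \<in> {\<alpha>. c \<alpha> \<noteq> 0}"
  then have le: "mdeg \<alpha> \<le> e" using assms by auto
  have p: "(\<Prod>i\<in>UNIV. (s * z $ i) ^ \<alpha> i) = s ^ mdeg \<alpha> * (\<Prod>i\<in>UNIV. (z $ i) ^ \<alpha> i)"
  proof -
    have "(\<Prod>i\<in>UNIV. (s * z $ i) ^ \<alpha> i) = (\<Prod>i\<in>UNIV. s ^ \<alpha> i * (z $ i) ^ \<alpha> i)"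
      by (simp add: power_mult_distrib)
    also have "\<dots> = (\<Prod>i\<in>UNIV. s ^ \<alpha> i) * (\<Prod>i\<in>UNIV. (z $ i) ^ \<alpha> i)"
      by (rule prod.distrib)
    also have "(\<Prod>i\<in>UNIV. s ^ \<alpha> i) = s ^ mdeg \<alpha>"
      by (simp add: mdeg_def power_sum)
    finally show ?thesis .
  qed
  have e: "s ^ e = s ^ (e - mdeg \<alpha>) * s ^ mdeg \<alpha>"
    using le by (simp add: power_add[symmetric])
  show "c \<alpha> * fst (s * a, s *\<^sub>R z) ^ (e - mdeg \<alpha>) * (\<Prod>i\<in>UNIV. (snd (s * a, s *\<^sub>R z) $ i) ^ \<alpha> i) =
        s ^ e * (c \<alpha> * fst (a, z) ^ (e - mdeg \<alpha>) * (\<Prod>i\<in>UNIV. (snd (a, z) $ i) ^ \<alpha> i))"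
  proof -
    have "c \<alpha> * fst (s * a, s *\<^sub>R z) ^ (e - mdeg \<alpha>) * (\<Prod>i\<in>UNIV. (snd (s * a, s *\<^sub>R z) $ i) ^ \<alpha> i)
       = c \<alpha> * (s * a) ^ (e - mdeg \<alpha>) * (s ^ mdeg \<alpha> * (\<Prod>i\<in>UNIV. (z $ i) ^ \<alpha> i))"
      by (simp only: fst_conv snd_conv vector_scaleR_component real_scaleR_def p)
    also have "\<dots> = s ^ e * (c \<alpha> * fst (a, z) ^ (e - mdeg \<alpha>) * (\<Prod>i\<in>UNIV. (snd (a, z) $ i) ^ \<alpha> i))"
      unfolding e by (simp add: power_mult_distrib)
    finally show ?thesis .
  qed
qed

lemma hom_one: "hom_eval e c (1, x) = peval c x"
  by (simp add: hom_eval_def peval_def)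

lemma poly_deg: assumes "is_poly g" "g \<alpha> \<noteq> 0" shows "mdeg \<alpha> \<le> pdeg g"
  using assms unfolding pdeg_def is_poly_def
  by (intro Max_ge) auto

lemma VR_to_VRh:
  assumes polys: "\<forall>g\<in>set gs. is_poly g" and x: "x \<in> VR gs"
  shows "(s, s *\<^sub>R x) \<in> VRh gs"
proof -
  have "hom_eval (pdeg g) g (s, s *\<^sub>R x) = 0" if g: "g \<in> set gs" for g
  proof -
    have "hom_eval (pdeg g) g (s * 1, s *\<^sub>R x) = s ^ pdeg g * hom_eval (pdeg g) g (1, x)"
      by (rule hom_scale) (use poly_deg polys g in blast)
    then show ?thesis using x g by (simp add: hom_one VR_def)
  qed
  then show ?thesis by (simp add: VRh_def)
qed

lemma VRh_to_VR:
  assumes polys: "\<forall>g\<in>set gs. is_poly g" and y: "(a, z) \<in> VRh gs" and a: "a > 0"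
  shows "(1/a) *\<^sub>R z \<in> VR gs"
proof -
  have "peval g ((1/a) *\<^sub>R z) = 0" if g: "g \<in> set gs" for g
  proof -
    have "hom_eval (pdeg g) g (a * 1, a *\<^sub>R ((1/a) *\<^sub>R z)) = a ^ pdeg g * hom_eval (pdeg g) g (1, (1/a) *\<^sub>R z)"
      by (rule hom_scale) (use poly_deg polys g in blast)
    moreover have "(a * 1, a *\<^sub>R ((1/a) *\<^sub>R z)) = (a, z)" using a by simp
    ultimately show ?thesis using y g a by (simp add: hom_one VRh_def)
  qed
  then show ?thesis by (simp add: VR_def)
qed

lemma box_open:
  fixes f :: "'a \<Rightarrow> real"
  assumes "finite M"
  shows "open {h. \<forall>\<alpha>\<in>M. \<bar>h \<alpha> - f \<alpha>\<bar> < r}"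
proof -
  have "open {h. \<forall>\<alpha>\<in>M. h (id \<alpha>) \<in> ball (f \<alpha>) r}"
    by (rule product_topology_basis') (use assms in auto)
  moreover have "{h. \<forall>\<alpha>\<in>M. h (id \<alpha>) \<in> ball (f \<alpha>) r} = {h. \<forall>\<alpha>\<in>M. \<bar>h \<alpha> - f \<alpha>\<bar> < r}"
    by (auto simp: dist_real_def abs_minus_commute)
  ultimately show ?thesis by simp
qed

lemma open_box_inside:
  fixes U :: "('a \<Rightarrow> real) set"
  assumes "open U" "f \<in> U"
  shows "\<exists>r>0. \<exists>K. finite K \<and> (\<forall>h. (\<forall>i\<in>K. \<bar>h i - f i\<bar> < r) \<longrightarrow> h \<in> U)"
proof -
  have "openin (product_topology (\<lambda>i. euclidean) UNIV) U" using assms(1) by (simp add: open_fun_def)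
  from product_topology_open_contains_basis[OF this assms(2)]
  obtain X where X: "f \<in> (\<Pi>\<^sub>E i\<in>UNIV. X i)" "\<forall>i. open (X i)" "finite {i. X i \<noteq> UNIV}"
      "(\<Pi>\<^sub>E i\<in>UNIV. X i) \<subseteq> U"
    by auto
  define K where "K = {i. X i \<noteq> UNIV}"
  have "\<forall>i\<in>K. \<exists>e>0. ball (f i) e \<subseteq> X i"
  proof
    fix i assume "i \<in> K"
    have "f i \<in> X i" using X(1) by (auto simp: PiE_iff)
    then show "\<exists>e>0. ball (f i) e \<subseteq> X i" using X(2) open_contains_ball_eq by blast
  qed
  then obtain \<rho> where \<rho>: "\<forall>i\<in>K. \<rho> i > 0 \<and> ball (f i) (\<rho> i) \<subseteq> X i" by metis
  define r where "r = Min (insert 1 (\<rho> ` K))"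
  have fin: "finite (insert 1 (\<rho> ` K))" using X(3) K_def by simp
  have rpos: "r > 0" unfolding r_def using fin \<rho> by (subst Min_gr_iff) auto
  have rle: "r \<le> \<rho> i" if "i \<in> K" for i unfolding r_def using fin that by (intro Min_le) auto
  have "h \<in> U" if h: "\<forall>i\<in>K. \<bar>h i - f i\<bar> < r" for h
  proof -
    have "h i \<in> X i" for i
    proof (cases "i \<in> K")
      case True
      then have "h i \<in> ball (f i) (\<rho> i)" using h rle[OF True] by (auto simp: dist_real_def)
      then show ?thesis using \<rho> True by blast
    next
      case False then show ?thesis by (auto simp: K_def)
    qed
    then have "h \<in> (\<Pi>\<^sub>E i\<in>UNIV. X i)" by (auto simp: PiE_iff)
    then show ?thesis using X(4) by auto
  qed
  then show ?thesis using rpos X(3) K_def by blast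
qed


lemma interior_char:
  assumes S: "S \<subseteq> PolySp d"
  shows "f \<in> PolyTop d interior_of S \<longleftrightarrow>
    f \<in> PolySp d \<and> (\<exists>r>0. \<forall>h\<in>PolySp d. (\<forall>\<alpha>\<in>Mset d. \<bar>h \<alpha> - f \<alpha>\<bar> < r) \<longrightarrow> h \<in> S)"
proof
  assume "f \<in> PolyTop d interior_of S"
  then obtain T where T: "openin (PolyTop d) T" "f \<in> T" "T \<subseteq> S" by (auto simp: interior_of_def)
  then obtain U where U: "open U" "T = U \<inter> PolySp d" by (auto simp: openin_subtopology)
  then have fP: "f \<in> PolySp d" "f \<in> U" using T by auto
  obtain r K where rK: "r > 0" "finite K" "\<forall>h. (\<forall>i\<in>K. \<bar>h i - f i\<bar> < r) \<longrightarrow> h \<in> U"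
    using open_box_inside[OF U(1) fP(2)] by blast
  have "h \<in> S" if h: "h \<in> PolySp d" "\<forall>\<alpha>\<in>Mset d. \<bar>h \<alpha> - f \<alpha>\<bar> < r" for h
  proof -
    have "\<bar>h i - f i\<bar> < r" for i
    proof (cases "i \<in> Mset d")
      case True then show ?thesis using h by auto
    next
      case False then show ?thesis using h(1) fP(1) rK(1) by (simp add: PolySp_iff)
    qed
    then have "h \<in> U" using rK(3) by auto
    then show ?thesis using h(1) U T by auto
  qed
  then show "f \<in> PolySp d \<and> (\<exists>r>0. \<forall>h\<in>PolySp d. (\<forall>\<alpha>\<in>Mset d. \<bar>h \<alpha> - f \<alpha>\<bar> < r) \<longrightarrow> h \<in> S)"
    using fP rK(1) by blast
next
  assume "f \<in> PolySp d \<and> (\<exists>r>0. \<forall>h\<in>PolySp d. (\<forall>\<alpha>\<in>Mset d. \<bar>h \<alpha> - f \<alpha>\<bar> < r) \<longrightarrow> h \<in> S)"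
  then obtain r where r: "f \<in> PolySp d" "r > 0" "\<forall>h\<in>PolySp d. (\<forall>\<alpha>\<in>Mset d. \<bar>h \<alpha> - f \<alpha>\<bar> < r) \<longrightarrow> h \<in> S"
    by blast
  define T where "T = {h. \<forall>\<alpha>\<in>Mset d. \<bar>h \<alpha> - f \<alpha>\<bar> < r} \<inter> PolySp d"
  have "openin (PolyTop d) T" unfolding T_def openin_subtopology open_openin[symmetric]
    using box_open[OF finite_Mset] by blast
  moreover have "f \<in> T" using r by (simp add: T_def)
  moreover have "T \<subseteq> S" using r by (auto simp: T_def)
  ultimately show "f \<in> PolyTop d interior_of S" by (auto simp: interior_of_def)
qed

lemma sum_abs_bound:
  fixes a w :: "'a \<Rightarrow> real"
  assumes "finite M" "\<forall>\<alpha>\<in>M. \<bar>w \<alpha>\<bar> \<le> W"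
  shows "\<bar>\<Sum>\<alpha>\<in>M. a \<alpha> * w \<alpha>\<bar> \<le> (\<Sum>\<alpha>\<in>M. \<bar>a \<alpha>\<bar>) * W"
proof -
  have "\<bar>\<Sum>\<alpha>\<in>M. a \<alpha> * w \<alpha>\<bar> \<le> (\<Sum>\<alpha>\<in>M. \<bar>a \<alpha> * w \<alpha>\<bar>)" by (rule sum_abs)
  also have "\<dots> \<le> (\<Sum>\<alpha>\<in>M. \<bar>a \<alpha>\<bar> * W)"
    by (rule sum_mono) (use assms(2) in \<open>auto simp: abs_mult intro: mult_left_mono\<close>)
  finally show ?thesis by (simp add: sum_distrib_right)
qed

lemma sum_est:
  fixes a w :: "'a \<Rightarrow> real"
  assumes "finite M" "\<forall>\<alpha>\<in>M. \<bar>a \<alpha>\<bar> \<le> r"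
  shows "\<bar>\<Sum>\<alpha>\<in>M. a \<alpha> * w \<alpha>\<bar> \<le> r * (\<Sum>\<alpha>\<in>M. \<bar>w \<alpha>\<bar>)"
proof -
  have "\<bar>\<Sum>\<alpha>\<in>M. a \<alpha> * w \<alpha>\<bar> \<le> (\<Sum>\<alpha>\<in>M. \<bar>a \<alpha> * w \<alpha>\<bar>)" by (rule sum_abs)
  also have "\<dots> \<le> (\<Sum>\<alpha>\<in>M. r * \<bar>w \<alpha>\<bar>)"
    by (rule sum_mono) (use assms(2) in \<open>auto simp: abs_mult intro: mult_right_mono\<close>)
  finally show ?thesis by (simp add: sum_distrib_left)
qed

lemma peval_diff:
  assumes "c \<in> PolySp d" "f \<in> PolySp d" "\<forall>\<alpha>\<in>Mset d. \<bar>c \<alpha> - f \<alpha>\<bar> \<le> r"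
  shows "\<bar>peval c x - peval f x\<bar> \<le> r * (\<Sum>\<alpha>\<in>Mset d. \<bar>mmono \<alpha> x\<bar>)"
  unfolding peval_M[OF assms(1)] peval_M[OF assms(2)] sum_subtractf[symmetric] left_diff_distrib[symmetric]
  by (rule sum_est[OF finite_Mset assms(3)])

lemma hom_diff:
  assumes "c \<in> PolySp d" "f \<in> PolySp d" "\<forall>\<alpha>\<in>Mset d. \<bar>c \<alpha> - f \<alpha>\<bar> \<le> r"
  shows "\<bar>hom_eval d c y - hom_eval d f y\<bar> \<le> r * (\<Sum>\<alpha>\<in>Mset d. \<bar>hmono d \<alpha> y\<bar>)"
  unfolding hom_M[OF assms(1)] hom_M[OF assms(2)] sum_subtractf[symmetric] left_diff_distrib[symmetric]
  by (rule sum_est[OF finite_Mset assms(3)])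

definition pert :: "('n \<Rightarrow> nat) \<Rightarrow> real \<Rightarrow> ('n::finite) mpoly_c \<Rightarrow> 'n mpoly_c" where
  "pert \<alpha> t f = (\<lambda>\<beta>. f \<beta> - (if \<beta> = \<alpha> then t else 0))"

lemma pert_Poly: "f \<in> PolySp d \<Longrightarrow> \<alpha> \<in> Mset d \<Longrightarrow> pert \<alpha> t f \<in> PolySp d"
  by (auto simp: PolySp_iff pert_def)

lemma peval_pert: assumes "f \<in> PolySp d" "\<alpha> \<in> Mset d"
  shows "peval (pert \<alpha> t f) x = peval f x - t * mmono \<alpha> x"
proof -
  have "(\<Sum>\<beta>\<in>Mset d. (if \<beta> = \<alpha> then t else 0) * mmono \<beta> x) = (\<Sum>\<beta>\<in>Mset d. if \<beta> = \<alpha> then t * mmono \<beta> x else 0)"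
    by (rule sum.cong) auto
  also have "\<dots> = t * mmono \<alpha> x" using assms(2) by (simp add: finite_Mset)
  finally have "(\<Sum>\<beta>\<in>Mset d. (if \<beta> = \<alpha> then t else 0) * mmono \<beta> x) = t * mmono \<alpha> x" .
  then show ?thesis
    unfolding peval_M[OF pert_Poly[OF assms]] peval_M[OF assms(1)]
    unfolding pert_def left_diff_distrib sum_subtractf
    by simp
qed

lemma hom_pert: assumes "f \<in> PolySp d" "\<alpha> \<in> Mset d"
  shows "hom_eval d (pert \<alpha> t f) y = hom_eval d f y - t * hmono d \<alpha> y"
proof -
  have "(\<Sum>\<beta>\<in>Mset d. (if \<beta> = \<alpha> then t else 0) * hmono d \<beta> y) = (\<Sum>\<beta>\<in>Mset d. if \<beta> = \<alpha> then t * hmono d \<beta> y else 0)"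
    by (rule sum.cong) auto
  also have "\<dots> = t * hmono d \<alpha> y" using assms(2) by (simp add: finite_Mset)
  finally have "(\<Sum>\<beta>\<in>Mset d. (if \<beta> = \<alpha> then t else 0) * hmono d \<beta> y) = t * hmono d \<alpha> y" .
  then show ?thesis
    unfolding hom_M[OF pert_Poly[OF assms]] hom_M[OF assms(1)]
    unfolding pert_def left_diff_distrib sum_subtractf
    by simp
qed

lemma pert_close: "\<bar>pert \<alpha> t f \<beta> - f \<beta>\<bar> \<le> \<bar>t\<bar>"
  by (simp add: pert_def)

lemma mmono_bound:
  assumes "\<forall>i. \<bar>x $ i\<bar> \<le> K"
  shows "\<bar>mmono \<alpha> x\<bar> \<le> K ^ mdeg \<alpha>"
proof -
  have "\<bar>mmono \<alpha> x\<bar> = (\<Prod>i\<in>UNIV. \<bar>x $ i\<bar> ^ \<alpha> i)" by (simp add: mmono_def abs_prod power_abs)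
  also have "\<dots> \<le> (\<Prod>i\<in>UNIV. K ^ \<alpha> i)"
    by (rule prod_mono) (use assms in \<open>auto intro: power_mono\<close>)
  also have "\<dots> = K ^ mdeg \<alpha>" by (simp add: mdeg_def power_sum)
  finally show ?thesis .
qed

lemma mmono_zero[simp]: "mmono (\<lambda>_. 0) x = 1" by (simp add: mmono_def)
lemma mdeg_zero[simp]: "mdeg (\<lambda>_. 0) = 0" by (simp add: mdeg_def)
lemma zero_Mset[simp]: "(\<lambda>_. 0) \<in> Mset d" by (simp add: Mset_def)

lemma frontier_char:
  assumes "f \<in> PolySp d" and cl: "f \<in> PolyTop d closure_of Pd d gs \<Longrightarrow> f \<in> Pd d gs"
  shows "f \<in> PolyTop d frontier_of Pd d gs \<longleftrightarrow> f \<in> Pd d gs \<and> f \<notin> PolyTop d interior_of Pd d gs"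
proof -
  have "Pd d gs \<subseteq> topspace (PolyTop d)" by (auto simp: Pd_def)
  then have "Pd d gs \<subseteq> PolyTop d closure_of Pd d gs" by (rule closure_of_subset)
  then show ?thesis using cl by (auto simp: frontier_of_def)
qed

lemma closure_Pd:
  assumes f: "f \<in> PolySp d" and fc: "f \<in> PolyTop d closure_of Pd d gs"
  shows "f \<in> Pd d gs"
proof (rule ccontr)
  assume "f \<notin> Pd d gs"
  then obtain x where x: "x \<in> VR gs" "peval f x < 0" using f by (auto simp: Pd_def)
  define B where "B = (\<Sum>\<alpha>\<in>Mset d. \<bar>mmono \<alpha> x\<bar>)"
  have B0: "B \<ge> 0" by (simp add: B_def sum_nonneg)
  define r where "r = - peval f x / (B + 1)"
  have r0: "r > 0" using x B0 unfolding r_def by (intro divide_pos_pos) auto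
  have rB: "r * B < - peval f x"
  proof -
    have "r * B < r * (B + 1)" using r0 by simp
    also have "\<dots> = - peval f x" using B0 by (simp add: r_def)
    finally show ?thesis .
  qed
  define T where "T = {h. \<forall>\<alpha>\<in>Mset d. \<bar>h \<alpha> - f \<alpha>\<bar> < r} \<inter> PolySp d"
  have "openin (PolyTop d) T" unfolding T_def openin_subtopology open_openin[symmetric]
    using box_open[OF finite_Mset] by blast
  moreover have "f \<in> T" using r0 f by (simp add: T_def)
  ultimately obtain h where h: "h \<in> Pd d gs" "h \<in> T" using fc by (auto simp: in_closure_of)
  then have "\<bar>peval h x - peval f x\<bar> \<le> r * B" unfolding B_def
    by (intro peval_diff) (auto simp: T_def f less_imp_le)
  then have "peval h x < 0" using rB by linarith
  then show False using h x by (auto simp: Pd_def)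
qed

lemma part1:
  fixes gs :: "('n::finite) mpoly_c list"
  assumes nonempty: "VR gs \<noteq> {}" and cpt: "compact (VR gs)" and f: "f \<in> PolySp d"
  shows "(delta gs f > 0 \<longleftrightarrow> f \<in> PolyTop d interior_of Pd d gs) \<and>
         (delta gs f = 0 \<longleftrightarrow> f \<in> PolyTop d frontier_of Pd d gs)"
proof -
  obtain R where R: "\<forall>x\<in>VR gs. norm x \<le> R"
    using compact_imp_bounded[OF cpt] by (auto simp: bounded_iff)
  define K where "K = max 1 R"
  have K1: "K \<ge> 1" by (simp add: K_def)
  have mb: "\<bar>mmono \<alpha> x\<bar> \<le> K ^ d" if x: "x \<in> VR gs" and a: "\<alpha> \<in> Mset d" for x \<alpha>
  proof -
    have "\<forall>i. \<bar>x $ i\<bar> \<le> K"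
      using R x component_le_norm_cart[of x] unfolding K_def by (meson max.coboundedI2 order_trans)
    then have "\<bar>mmono \<alpha> x\<bar> \<le> K ^ mdeg \<alpha>" by (rule mmono_bound)
    also have "\<dots> \<le> K ^ d" using K1 a by (intro power_increasing) (auto simp: Mset_def)
    finally show ?thesis .
  qed
  define B where "B = real (card (Mset d :: ('n \<Rightarrow> nat) set)) * K ^ d"
  have B0: "B \<ge> 0" using K1 by (simp add: B_def)
  have SB: "(\<Sum>\<alpha>\<in>Mset d. \<bar>mmono \<alpha> x\<bar>) \<le> B" if "x \<in> VR gs" for x
    unfolding B_def by (rule sum_bounded_above) (use mb that in auto)
  have bdd: "bdd_below (peval f ` VR gs)"
  proof (rule bdd_belowI2)
    fix x assume x: "x \<in> VR gs"
    have "\<bar>peval f x\<bar> \<le> (\<Sum>\<alpha>\<in>Mset d. \<bar>f \<alpha>\<bar>) * K ^ d"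
      unfolding peval_M[OF f] by (rule sum_abs_bound[OF finite_Mset]) (use mb x in auto)
    then show "- ((\<Sum>\<alpha>\<in>Mset d. \<bar>f \<alpha>\<bar>) * K ^ d) \<le> peval f x" by linarith
  qed
  have low: "delta gs f \<le> peval f x" if "x \<in> VR gs" for x
    unfolding delta_def using bdd that by (intro cInf_lower) auto
  have nonneg: "f \<in> Pd d gs \<longleftrightarrow> delta gs f \<ge> 0"
  proof
    assume "f \<in> Pd d gs"
    then show "delta gs f \<ge> 0" unfolding delta_def using nonempty
      by (intro cInf_greatest) (auto simp: Pd_def)
  next
    assume "delta gs f \<ge> 0"
    then show "f \<in> Pd d gs" using low f by (auto simp: Pd_def intro: order_trans)
  qed
  have Psub: "Pd d gs \<subseteq> PolySp d" by (auto simp: Pd_def)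
  have pos: "delta gs f > 0 \<longleftrightarrow> f \<in> PolyTop d interior_of Pd d gs"
  proof
    assume dp: "delta gs f > 0"
    define r where "r = delta gs f / (B + 1)"
    have r0: "r > 0" using dp B0 by (simp add: r_def)
    have rB: "r * B < delta gs f"
    proof -
      have "r * B < r * (B + 1)" using r0 by simp
      also have "\<dots> = delta gs f" using B0 by (simp add: r_def)
      finally show ?thesis .
    qed
    have "h \<in> Pd d gs" if h: "h \<in> PolySp d" "\<forall>\<alpha>\<in>Mset d. \<bar>h \<alpha> - f \<alpha>\<bar> < r" for h
    proof -
      have "peval h x \<ge> 0" if x: "x \<in> VR gs" for x
      proof -
        have "\<bar>peval h x - peval f x\<bar> \<le> r * (\<Sum>\<alpha>\<in>Mset d. \<bar>mmono \<alpha> x\<bar>)"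
          by (rule peval_diff) (use h f in \<open>auto intro: less_imp_le\<close>)
        also have "\<dots> \<le> r * B" using SB[OF x] r0 by (intro mult_left_mono) auto
        finally show ?thesis using rB low[OF x] by linarith
      qed
      then show ?thesis using h by (auto simp: Pd_def)
    qed
    then show "f \<in> PolyTop d interior_of Pd d gs"
      using interior_char[OF Psub] f r0 by blast
  next
    assume "f \<in> PolyTop d interior_of Pd d gs"
    then obtain r where r: "r > 0" "\<forall>h\<in>PolySp d. (\<forall>\<alpha>\<in>Mset d. \<bar>h \<alpha> - f \<alpha>\<bar> < r) \<longrightarrow> h \<in> Pd d gs"
      using interior_char[OF Psub] by blast
    define h where "h = pert (\<lambda>_. 0) (r/2) f"
    have hP: "h \<in> PolySp d" unfolding h_def by (rule pert_Poly[OF f]) simp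
    have "\<bar>h \<alpha> - f \<alpha>\<bar> < r" for \<alpha>
      using pert_close[of "\<lambda>_. 0" "r/2" f \<alpha>] r(1) unfolding h_def by simp
    then have "h \<in> Pd d gs" using r hP by blast
    then have "peval f x - r/2 \<ge> 0" if "x \<in> VR gs" for x
      using that peval_pert[OF f, of "\<lambda>_. 0" "r/2" x] unfolding h_def by (auto simp: Pd_def)
    then have "delta gs f \<ge> r/2" unfolding delta_def using nonempty
      by (intro cInf_greatest) auto
    then show "delta gs f > 0" using r(1) by linarith
  qed
  have fr: "f \<in> PolyTop d frontier_of Pd d gs \<longleftrightarrow> f \<in> Pd d gs \<and> f \<notin> PolyTop d interior_of Pd d gs"
    by (rule frontier_char[OF f closure_Pd[OF f]])
  show ?thesis using pos nonneg fr by auto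
qed

lemma big_coord:
  fixes a :: real and z :: "real^'n::finite"
  assumes "norm (a, z) = 1"
  shows "\<bar>a\<bar> \<ge> 1 / (real CARD('n) + 1) \<or> (\<exists>j. \<bar>z $ j\<bar> \<ge> 1 / (real CARD('n) + 1))"
proof (rule ccontr)
  define c where "c = 1 / (real CARD('n) + 1)"
  assume "\<not> ?thesis"
  then have sm: "\<bar>a\<bar> < c" "\<forall>j. \<bar>z $ j\<bar> < c" by (auto simp: c_def not_le)
  have c0: "c > 0" by (simp add: c_def)
  have c1: "c \<le> 1" by (simp add: c_def)
  have sq: "b * b < c" if "\<bar>b\<bar> < c" for b :: real
  proof -
    have "\<bar>b\<bar> * \<bar>b\<bar> \<le> \<bar>b\<bar> * 1" using that c1 by (intro mult_left_mono) auto
    then show ?thesis using that by (simp add: abs_mult_self_eq)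
  qed
  have "1 = (norm (a, z))\<^sup>2" using assms by simp
  also have "\<dots> = a * a + inner z z" by (simp add: norm_Pair dot_square_norm power2_eq_square)
  also have "inner z z = (\<Sum>j\<in>UNIV. z $ j * z $ j)" by (simp add: inner_vec_def)
  also have "\<dots> \<le> real CARD('n) * c"
    by (rule sum_bounded_above) (use sq sm in \<open>auto intro: less_imp_le\<close>)
  finally have "1 < c + real CARD('n) * c" using sq[OF sm(1)] by linarith
  also have "\<dots> = 1" by (simp add: c_def field_simps)
  finally show False by simp
qed

lemma continuous_hom: "continuous_on UNIV (hom_eval d g)"
  unfolding hom_eval_def by (intro continuous_intros)

lemma NN:
  assumes cai: "closed_at_infinity gs" and polys: "\<forall>g\<in>set gs. is_poly g"
    and g: "g \<in> Pd d gs" and y: "y \<in> VRh gs" "fst y \<ge> 0"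
  shows "hom_eval d g y \<ge> 0"
proof -
  have gP: "g \<in> PolySp d" using g by (simp add: Pd_def)
  have deg: "\<forall>\<alpha>. g \<alpha> \<noteq> 0 \<longrightarrow> mdeg \<alpha> \<le> d" using gP by (simp add: PolySp_def)
  define C where "C = {y. 0 \<le> hom_eval d g y}"
  have "closed C" unfolding C_def
    by (rule closed_Collect_le) (auto intro: continuous_hom)
  moreover have "VRh gs \<inter> {y. fst y > 0} \<subseteq> C"
  proof
    fix y assume "y \<in> VRh gs \<inter> {y. fst y > 0}"
    then obtain a z where az: "y = (a, z)" "(a, z) \<in> VRh gs" "a > 0" by (cases y) auto
    have x: "(1/a) *\<^sub>R z \<in> VR gs" by (rule VRh_to_VR[OF polys az(2,3)])
    have "hom_eval d g (a * 1, a *\<^sub>R ((1/a) *\<^sub>R z)) = a ^ d * hom_eval d g (1, (1/a) *\<^sub>R z)"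
      by (rule hom_scale[OF deg])
    moreover have "(a * 1, a *\<^sub>R ((1/a) *\<^sub>R z)) = (a, z)" using az by simp
    moreover have "peval g ((1/a) *\<^sub>R z) \<ge> 0" using g x by (auto simp: Pd_def)
    ultimately show "y \<in> C" using az by (simp add: C_def hom_one)
  qed
  ultimately have "closure (VRh gs \<inter> {y. fst y > 0}) \<subseteq> C" by (rule closure_minimal[rotated])
  moreover have "y \<in> closure (VRh gs \<inter> {y. fst y > 0})"
    using cai y unfolding closed_at_infinity_def by blast
  ultimately show ?thesis by (auto simp: C_def)
qed

lemma dehom:
  assumes polys: "\<forall>g\<in>set gs. is_poly g" and x: "x \<in> VR gs"
  defines "s \<equiv> 1 / norm (1::real, x)"
  shows "s > 0" "(s, s *\<^sub>R x) \<in> VRh gs" "norm (s, s *\<^sub>R x) = 1"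
    "\<And>f. f \<in> PolySp d \<Longrightarrow> hom_eval d f (s, s *\<^sub>R x) = s ^ d * peval f x"
proof -
  have N: "norm (1::real, x) \<ge> 1" using norm_fst_le[of "1::real" x] by simp
  then show s0: "s > 0" unfolding s_def by (intro divide_pos_pos) auto
  show "(s, s *\<^sub>R x) \<in> VRh gs" by (rule VR_to_VRh[OF polys x])
  have "norm (s, s *\<^sub>R x) = norm (s *\<^sub>R (1::real, x))" by simp
  also have "\<dots> = s * norm (1::real, x)" using s0 by (simp only: norm_scaleR abs_of_pos)
  also have "\<dots> = 1" using N by (simp add: s_def zero_prod_def)
  finally show "norm (s, s *\<^sub>R x) = 1" .
  fix f :: "'a mpoly_c" assume f: "f \<in> PolySp d"
  have "hom_eval d f (s * 1, s *\<^sub>R x) = s ^ d * hom_eval d f (1, x)"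
    by (rule hom_scale) (use f in \<open>simp add: PolySp_def\<close>)
  then show "hom_eval d f (s, s *\<^sub>R x) = s ^ d * peval f x" by (simp add: hom_one)
qed

lemma ej_props:
  fixes j :: "'n::finite"
  shows "mdeg (\<lambda>i. if i = j then d else 0) = d"
    and "(\<lambda>i. if i = j then d else 0) \<in> Mset d"
    and "hmono d (\<lambda>i. if i = j then d else 0) (a, z) = (z $ j) ^ d"
proof -
  show md: "mdeg (\<lambda>i. if i = j then d else 0) = d" by (simp add: mdeg_def)
  then show "(\<lambda>i. if i = j then d else 0) \<in> Mset d" by (simp add: Mset_def)
  have "(\<Prod>i\<in>UNIV. (z $ i) ^ (if i = j then d else 0)) = (\<Prod>i\<in>UNIV. if i = j then (z $ j) ^ d else 1)"
    by (rule prod.cong) auto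
  then have "mmono (\<lambda>i. if i = j then d else 0) z = (z $ j) ^ d" by (simp add: mmono_def)
  then show "hmono d (\<lambda>i. if i = j then d else 0) (a, z) = (z $ j) ^ d"
    by (simp add: hmono_def md)
qed

lemma hmono_zero: "hmono d (\<lambda>_. 0) (a, z) = a ^ d"
  by (simp add: hmono_def)

lemma part2:
  fixes gs :: "('n::finite) mpoly_c list"
  assumes polys: "\<forall>g\<in>set gs. is_poly g"
    and nonempty: "VR gs \<noteq> {}" and cai: "closed_at_infinity gs" and f: "f \<in> PolySp d"
  shows "(delta_h d gs f > 0 \<longleftrightarrow> f \<in> PolyTop d interior_of Pd d gs) \<and>
         (delta_h d gs f = 0 \<longleftrightarrow> f \<in> PolyTop d frontier_of Pd d gs)"
proof -
  define S where "S = {y \<in> VRh gs. norm y = 1 \<and> fst y \<ge> 0}"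
  have dS: "delta_h d gs f = Inf (hom_eval d f ` S)" by (simp add: delta_h_def S_def)
  have crd: "\<bar>fst y\<bar> \<le> 1 \<and> (\<forall>i. \<bar>snd y $ i\<bar> \<le> 1)" if "y \<in> S" for y
  proof -
    have n1: "norm (fst y, snd y) = 1" using that by (simp add: S_def)
    have "norm (fst y) \<le> 1" using norm_fst_le[of "fst y" "snd y"] n1 by simp
    moreover have "norm (snd y $ i) \<le> 1" for i
      using norm_snd_le[of "snd y" "fst y"] n1 component_le_norm_cart[of "snd y" i] by simp
    ultimately show ?thesis by simp
  qed
  have hb: "\<bar>hmono d \<alpha> y\<bar> \<le> 1" if y: "y \<in> S" for y \<alpha>
  proof -
    have "\<bar>mmono \<alpha> (snd y)\<bar> \<le> 1 ^ mdeg \<alpha>" by (rule mmono_bound) (use crd[OF y] in auto)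
    moreover have "\<bar>fst y ^ (d - mdeg \<alpha>)\<bar> \<le> 1"
      using crd[OF y] by (simp add: power_abs power_le_one)
    ultimately show ?thesis unfolding hmono_def abs_mult
      by (simp add: mult_le_one)
  qed
  define B where "B = real (card (Mset d :: ('n \<Rightarrow> nat) set))"
  have B0: "B \<ge> 0" by (simp add: B_def)
  have SB: "(\<Sum>\<alpha>\<in>Mset d. \<bar>hmono d \<alpha> y\<bar>) \<le> B" if "y \<in> S" for y
    using sum_bounded_above[of "Mset d" "\<lambda>\<alpha>. \<bar>hmono d \<alpha> y\<bar>" 1] hb[OF that] unfolding B_def by simp
  have bdd: "bdd_below (hom_eval d f ` S)"
  proof (rule bdd_belowI2)
    fix y assume y: "y \<in> S"
    have "\<bar>hom_eval d f y\<bar> \<le> (\<Sum>\<alpha>\<in>Mset d. \<bar>f \<alpha>\<bar>) * 1"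
      unfolding hom_M[OF f] by (rule sum_abs_bound[OF finite_Mset]) (use hb y in auto)
    then show "- (\<Sum>\<alpha>\<in>Mset d. \<bar>f \<alpha>\<bar>) \<le> hom_eval d f y" by linarith
  qed
  have low: "delta_h d gs f \<le> hom_eval d f y" if "y \<in> S" for y
    unfolding dS using bdd that by (intro cInf_lower) auto
  obtain x0 where x0: "x0 \<in> VR gs" using nonempty by auto
  have ptS: "(1 / norm (1::real, x), (1 / norm (1::real, x)) *\<^sub>R x) \<in> S" if "x \<in> VR gs" for x
    using dehom(1-3)[OF polys that] unfolding S_def by (auto intro: less_imp_le)
  have Sne: "S \<noteq> {}" using ptS[OF x0] by blast
  have nonneg: "f \<in> Pd d gs \<longleftrightarrow> delta_h d gs f \<ge> 0"
  proof
    assume fP: "f \<in> Pd d gs"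
    show "delta_h d gs f \<ge> 0" unfolding dS using Sne
      by (intro cInf_greatest) (auto simp: S_def intro: NN[OF cai polys fP])
  next
    assume dn: "delta_h d gs f \<ge> 0"
    have "peval f x \<ge> 0" if x: "x \<in> VR gs" for x
    proof -
      define s where "s = 1 / norm (1::real, x)"
      have "0 \<le> hom_eval d f (s, s *\<^sub>R x)" using low[OF ptS[OF x]] dn unfolding s_def by linarith
      also have "\<dots> = s ^ d * peval f x" using dehom(4)[OF polys x f] unfolding s_def by simp
      finally have "0 \<le> s ^ d * peval f x" .
      moreover have "0 < s ^ d" using dehom(1)[OF polys x] unfolding s_def[symmetric] by simp
      ultimately show ?thesis by (metis zero_le_mult_iff not_le)
    qed
    then show "f \<in> Pd d gs" using f by (simp add: Pd_def)
  qed
  have Psub: "Pd d gs \<subseteq> PolySp d" by (auto simp: Pd_def)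
  have pos: "delta_h d gs f > 0 \<longleftrightarrow> f \<in> PolyTop d interior_of Pd d gs"
  proof
    assume dp: "delta_h d gs f > 0"
    define r where "r = delta_h d gs f / (B + 1)"
    have r0: "r > 0" using dp B0 by (simp add: r_def)
    have rB: "r * B < delta_h d gs f"
    proof -
      have "r * B < r * (B + 1)" using r0 by simp
      also have "\<dots> = delta_h d gs f" using B0 by (simp add: r_def)
      finally show ?thesis .
    qed
    have "h \<in> Pd d gs" if h: "h \<in> PolySp d" "\<forall>\<alpha>\<in>Mset d. \<bar>h \<alpha> - f \<alpha>\<bar> < r" for h
    proof -
      have hpos: "hom_eval d h y > 0" if y: "y \<in> S" for y
      proof -
        have "\<bar>hom_eval d h y - hom_eval d f y\<bar> \<le> r * (\<Sum>\<alpha>\<in>Mset d. \<bar>hmono d \<alpha> y\<bar>)"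
          by (rule hom_diff) (use h f in \<open>auto intro: less_imp_le\<close>)
        also have "\<dots> \<le> r * B" using SB[OF y] r0 by (intro mult_left_mono) auto
        finally show ?thesis using rB low[OF y] by linarith
      qed
      have "peval h x \<ge> 0" if x: "x \<in> VR gs" for x
      proof -
        define s where "s = 1 / norm (1::real, x)"
        have "0 < hom_eval d h (s, s *\<^sub>R x)" using hpos[OF ptS[OF x]] unfolding s_def by simp
        also have "\<dots> = s ^ d * peval h x" using dehom(4)[OF polys x h(1)] unfolding s_def by simp
        finally have "0 < s ^ d * peval h x" .
        moreover have "0 < s ^ d" using dehom(1)[OF polys x] unfolding s_def[symmetric] by simp
        ultimately show ?thesis by (metis zero_less_mult_iff not_le less_imp_le)
      qed
      then show ?thesis using h by (auto simp: Pd_def)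
    qed
    then show "f \<in> PolyTop d interior_of Pd d gs"
      using interior_char[OF Psub] f r0 by blast
  next
    assume "f \<in> PolyTop d interior_of Pd d gs"
    then obtain r where r: "r > 0" "\<forall>h\<in>PolySp d. (\<forall>\<alpha>\<in>Mset d. \<bar>h \<alpha> - f \<alpha>\<bar> < r) \<longrightarrow> h \<in> Pd d gs"
      using interior_char[OF Psub] by blast
    have key: "hom_eval d f y \<ge> r/2 * \<bar>hmono d \<alpha> y\<bar>" if y: "y \<in> S" and a: "\<alpha> \<in> Mset d" for y \<alpha>
    proof -
      define t where "t = (if hmono d \<alpha> y \<ge> 0 then r/2 else - (r/2))"
      have tm: "t * hmono d \<alpha> y = r/2 * \<bar>hmono d \<alpha> y\<bar>" by (simp add: t_def)
      define h where "h = pert \<alpha> t f"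
      have hP: "h \<in> PolySp d" unfolding h_def by (rule pert_Poly[OF f a])
      have "\<bar>h \<beta> - f \<beta>\<bar> < r" for \<beta>
        using pert_close[of \<alpha> t f \<beta>] r(1) unfolding h_def by (simp add: t_def split: if_splits)
      then have "h \<in> Pd d gs" using r hP by blast
      then have "hom_eval d h y \<ge> 0" using y by (intro NN[OF cai polys]) (auto simp: S_def)
      then show ?thesis using hom_pert[OF f a, of t y] tm unfolding h_def by linarith
    qed
    define c where "c = 1 / (real CARD('n) + 1)"
    have c0: "c \<ge> 0" by (simp add: c_def)
    have lb: "hom_eval d f y \<ge> r/2 * c ^ d" if y: "y \<in> S" for y
    proof -
      obtain a z where az: "y = (a, z)" by (cases y)
      have "norm (a, z) = 1" using y az by (simp add: S_def)
      from big_coord[OF this] have "\<exists>\<alpha>\<in>Mset d. \<bar>hmono d \<alpha> y\<bar> \<ge> c ^ d"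
      proof
        assume "\<bar>a\<bar> \<ge> 1 / (real CARD('n) + 1)"
        then have "\<bar>hmono d (\<lambda>_. 0) y\<bar> \<ge> c ^ d" using c0
          by (simp add: az hmono_zero power_abs c_def power_mono)
        then show ?thesis by (intro bexI[of _ "\<lambda>_. 0"]) auto
      next
        assume "\<exists>j. \<bar>z $ j\<bar> \<ge> 1 / (real CARD('n) + 1)"
        then obtain j where j: "\<bar>z $ j\<bar> \<ge> c" by (auto simp: c_def)
        then have "\<bar>hmono d (\<lambda>i. if i = j then d else 0) y\<bar> \<ge> c ^ d" using c0
          by (simp add: az ej_props(3) power_abs power_mono)
        then show ?thesis using ej_props(2)[of j d] by blast
      qed
      then obtain \<alpha> where a: "\<alpha> \<in> Mset d" "\<bar>hmono d \<alpha> y\<bar> \<ge> c ^ d" by blast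
      have "r/2 * c ^ d \<le> r/2 * \<bar>hmono d \<alpha> y\<bar>" using a(2) r(1) by (intro mult_left_mono) auto
      also have "\<dots> \<le> hom_eval d f y" by (rule key[OF y a(1)])
      finally show ?thesis .
    qed
    have "delta_h d gs f \<ge> r/2 * c ^ d" unfolding dS using Sne lb
      by (intro cInf_greatest) auto
    moreover have "r/2 * c ^ d > 0" using r(1) by (simp add: c_def)
    ultimately show "delta_h d gs f > 0" by linarith
  qed
  have fr: "f \<in> PolyTop d frontier_of Pd d gs \<longleftrightarrow> f \<in> Pd d gs \<and> f \<notin> PolyTop d interior_of Pd d gs"
    by (rule frontier_char[OF f closure_Pd[OF f]])
  show ?thesis using pos nonneg fr by auto
qed


theorem mainTheorem9:
  fixes gs :: "('n::finite) mpoly_c list" and d :: nat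
  assumes polys: "\<forall>g\<in>set gs. is_poly g"
    and nonempty: "VR gs \<noteq> {}"
    and d: "d \<ge> 1"
  shows "(compact (VR gs) \<longrightarrow>
            (\<forall>f\<in>PolySp d.
               (delta gs f > 0 \<longleftrightarrow> f \<in> PolyTop d interior_of Pd d gs) \<and>
               (delta gs f = 0 \<longleftrightarrow> f \<in> PolyTop d frontier_of Pd d gs)))
       \<and> (closed_at_infinity gs \<longrightarrow>
            (\<forall>f\<in>PolySp d.
               (delta_h d gs f > 0 \<longleftrightarrow> f \<in> PolyTop d interior_of Pd d gs) \<and>
               (delta_h d gs f = 0 \<longleftrightarrow> f \<in> PolyTop d frontier_of Pd d gs)))"
  using part1[OF nonempty] part2[OF polys nonempty] by blast

end
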